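(* Let $\mathcal{A}$ be a finite-domain structure with domain $A$ of size $n$ on an infinite relational signature $\sigma$. For each $m$ (and each set $\Omega_m$ of adversaries of length $m$ for which the sentences below are well defined), $\mathcal{A}\models\phi_{n,\Omega_m,\mathcal{A}}$ if and only if for every finite subset $\sigma'\subset\sigma$, $\mathcal{A}^{\sigma'}\models\phi^{\sigma'}_{n,\Omega_m,\mathcal{A}}$.
   Context: For $\sigma'\subseteq\sigma$, $\mathcal{A}^{\sigma'}$ is the $\sigma'$-reduct of $\mathcal{A}$. An adversary of length $m$ is a set $\mathscr{O}\subseteq A^m$ of $m$-tuples; $\Omega_m$ is a set of such adversaries. A map $\mu:[n]\times[m]\to A$ is consistent with $\mathscr{O}$ if for every $(i_1,\ldots,i_m)\in[n]^m$ the tuple $(\mu(i_1,1),\ldots,\mu(i_m,m))$ lies in $\mathscr{O}$; $A^{[n.m]}_{\restriction\mathscr{O}}$ is the set of such maps. Let $\sigma^{(n.m)}$ be $\sigma$ expanded by constants $c_{i,j}$, $i\in[n]$, $j\in[m]$, and let $\mathfrak{A}_{\mathscr{O},\mu}$ be the expansion of $\mathcal{A}$ interpreting $c_{i,j}$ as $\mu(i,j)$. Form the direct product structure $P=\bigotimes_{\mathscr{O}\in\Omega_m}\bigotimes_{\mu\in A^{[n.m]}_{\restriction\mathscr{O}}}\mathfrak{A}_{\mathscr{O},\mu}$ (domain the product of copies of $A$, relations and constants interpreted coordinatewise). It is assumed that the $n.m$ constants are interpreted by pairwise distinct elements of $P$ (otherwise the sentence is not defined). The canonical query of the $\sigma$-reduct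 of $P$ is the conjunction, with one variable per element of $P$, of all atoms $R(x_{p_1},\ldots,x_{p_r})$ with $R\in\sigma$ and $(p_1,\ldots,p_r)\in R^P$. $\phi_{n,\Omega_m,\mathcal{A}}$ is the (possibly infinite) sentence obtained from this canonical query by renaming the variable of the element interpreting $c_{i,j}$ as $w_{i,j}$, universally quantifying all $w_{i,j}$ outermost and existentially quantifying all remaining variables. For finite $\sigma'\subset\sigma$, $\phi^{\sigma'}_{n,\Omega_m,\mathcal{A}}$ is the (finite) sentence obtained in the same way from the product $\bigotimes_{\mathscr{O}}\bigotimes_{\mu}\mathfrak{A}^{\sigma'}_{\mathscr{O},\mu}$ of the expansions of $\mathcal{A}^{\sigma'}$ by the constants, using only the relations of $\sigma'$. *)

theory Defs
  imports Main "HOL-Library.FuncSet"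
begin

text \<open>A relational structure: domain D, signature S, arity ar, interpretation I
  (relation symbol \<mapsto> set of tuples, tuples as lists).\<close>

definition wf_structure :: "'a set \<Rightarrow> 'r set \<Rightarrow> ('r \<Rightarrow> nat) \<Rightarrow> ('r \<Rightarrow> 'a list set) \<Rightarrow> bool" where
  "wf_structure D S ar I \<longleftrightarrow>
     (\<forall>R\<in>S. I R \<subseteq> {xs. length xs = ar R \<and> set xs \<subseteq> D})"

definition reduct :: "('r \<Rightarrow> 'a list set) \<Rightarrow> 'r set \<Rightarrow> ('r \<Rightarrow> 'a list set)" where
  "reduct I S' = (\<lambda>R. if R \<in> S' then I R else {})"

definition adversaries :: "'a set \<Rightarrow> nat \<Rightarrow> 'a list set set" where
  "adversaries D m = Pow {xs. length xs = m \<and> set xs \<subseteq> D}"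

definition consistent_maps :: "'a set \<Rightarrow> nat \<Rightarrow> nat \<Rightarrow> 'a list set \<Rightarrow> (nat \<times> nat \<Rightarrow> 'a) set" where
  "consistent_maps D n m Ob =
     {\<mu> \<in> ({1..n} \<times> {1..m}) \<rightarrow>\<^sub>E D.
        \<forall>idx. length idx = m \<longrightarrow> set idx \<subseteq> {1..n} \<longrightarrow>
              map (\<lambda>j. \<mu> (idx ! (j - 1), j)) [1..<m+1] \<in> Ob}"

definition prod_index :: "'a set \<Rightarrow> nat \<Rightarrow> nat \<Rightarrow> 'a list set set \<Rightarrow> ('a list set \<times> (nat \<times> nat \<Rightarrow> 'a)) set" where
  "prod_index D n m \<Omega> = {(Ob, \<mu>). Ob \<in> \<Omega> \<and> \<mu> \<in> consistent_maps D n m Ob}"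

definition prod_dom :: "'a set \<Rightarrow> nat \<Rightarrow> nat \<Rightarrow> 'a list set set \<Rightarrow> (('a list set \<times> (nat \<times> nat \<Rightarrow> 'a)) \<Rightarrow> 'a) set" where
  "prod_dom D n m \<Omega> = prod_index D n m \<Omega> \<rightarrow>\<^sub>E D"

definition prod_rel :: "'a set \<Rightarrow> nat \<Rightarrow> nat \<Rightarrow> 'a list set set \<Rightarrow> ('r \<Rightarrow> nat) \<Rightarrow> ('r \<Rightarrow> 'a list set)
    \<Rightarrow> 'r \<Rightarrow> (('a list set \<times> (nat \<times> nat \<Rightarrow> 'a)) \<Rightarrow> 'a) list set" where
  "prod_rel D n m \<Omega> ar I R =
     {ps. length ps = ar R \<and> set ps \<subseteq> prod_dom D n m \<Omega> \<and>
          (\<forall>k \<in> prod_index D n m \<Omega>. map (\<lambda>p. p k) ps \<in> I R)}"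

definition prod_const :: "'a set \<Rightarrow> nat \<Rightarrow> nat \<Rightarrow> 'a list set set \<Rightarrow> nat \<times> nat
    \<Rightarrow> (('a list set \<times> (nat \<times> nat \<Rightarrow> 'a)) \<Rightarrow> 'a)" where
  "prod_const D n m \<Omega> ij = restrict (\<lambda>(Ob, \<mu>). \<mu> ij) (prod_index D n m \<Omega>)"

text \<open>Well-definedness: the n.m constants are interpreted by pairwise distinct elements.\<close>
definition consts_distinct :: "'a set \<Rightarrow> nat \<Rightarrow> nat \<Rightarrow> 'a list set set \<Rightarrow> bool" where
  "consts_distinct D n m \<Omega> \<longleftrightarrow> inj_on (prod_const D n m \<Omega>) ({1..n} \<times> {1..m})"

datatype 'e var = W nat nat | X 'e

text \<open>Sentences of shape  forall univ. exists ex. conjunction of atoms  (possibly infinite conjunction).\<close>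
record ('r, 'v) ae_sentence =
  atoms :: "('r \<times> 'v list) set"
  univ_vars :: "'v set"
  ex_vars :: "'v set"

definition sat :: "'a set \<Rightarrow> ('r \<Rightarrow> 'a list set) \<Rightarrow> ('r, 'v) ae_sentence \<Rightarrow> bool" where
  "sat D I \<phi> \<longleftrightarrow>
     (\<forall>g. (\<forall>v\<in>univ_vars \<phi>. g v \<in> D) \<longrightarrow>
        (\<exists>h. (\<forall>v\<in>ex_vars \<phi>. h v \<in> D) \<and>
             (\<forall>(R, vs) \<in> atoms \<phi>. map (\<lambda>v. if v \<in> univ_vars \<phi> then g v else h v) vs \<in> I R)))"

text \<open>Variable naming: the element interpreting c_{i,j} gets the variable w_{i,j}.\<close>
definition var_of :: "'a set \<Rightarrow> nat \<Rightarrow> nat \<Rightarrow> 'a list set set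
    \<Rightarrow> (('a list set \<times> (nat \<times> nat \<Rightarrow> 'a)) \<Rightarrow> 'a) \<Rightarrow> (('a list set \<times> (nat \<times> nat \<Rightarrow> 'a)) \<Rightarrow> 'a) var" where
  "var_of D n m \<Omega> p =
     (if \<exists>ij \<in> {1..n} \<times> {1..m}. prod_const D n m \<Omega> ij = p
      then (let (i, j) = (THE ij. ij \<in> {1..n} \<times> {1..m} \<and> prod_const D n m \<Omega> ij = p) in W i j)
      else X p)"

text \<open>phi_{n,Omega_m,A} built over the relation symbols S (S = sigma gives the full sentence,
  S = sigma' finite gives phi^{sigma'}).\<close>
definition phi :: "'a set \<Rightarrow> nat \<Rightarrow> nat \<Rightarrow> 'a list set set \<Rightarrow> ('r \<Rightarrow> nat) \<Rightarrow> ('r \<Rightarrow> 'a list set) \<Rightarrow> 'r set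
    \<Rightarrow> ('r, (('a list set \<times> (nat \<times> nat \<Rightarrow> 'a)) \<Rightarrow> 'a) var) ae_sentence" where
  "phi D n m \<Omega> ar I S =
     \<lparr> atoms = {(R, map (var_of D n m \<Omega>) ps) | R ps. R \<in> S \<and> ps \<in> prod_rel D n m \<Omega> ar I R},
       univ_vars = {W i j | i j. i \<in> {1..n} \<and> j \<in> {1..m}},
       ex_vars = {X p | p. p \<in> prod_dom D n m \<Omega> \<and> p \<notin> prod_const D n m \<Omega> ` ({1..n} \<times> {1..m})} \<rparr>"

end

theory Submission
  imports Defs
begin

lemma var_of_in:
  assumes "consts_distinct D n m \<Omega>" "p \<in> prod_dom D n m \<Omega>"
  shows "var_of D n m \<Omega> p \<in> univ_vars (phi D n m \<Omega> ar I S) \<union> ex_vars (phi D n m \<Omega> ar I S)"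
proof (cases "\<exists>ij \<in> {1..n} \<times> {1..m}. prod_const D n m \<Omega> ij = p")
  case True
  then obtain ij where ij: "ij \<in> {1..n} \<times> {1..m}" "prod_const D n m \<Omega> ij = p" by blast
  have u: "\<exists>!ij. ij \<in> {1..n} \<times> {1..m} \<and> prod_const D n m \<Omega> ij = p"
    using ij assms(1) unfolding consts_distinct_def inj_on_def by blast
  define t where "t = (THE ij. ij \<in> {1..n} \<times> {1..m} \<and> prod_const D n m \<Omega> ij = p)"
  have t: "t \<in> {1..n} \<times> {1..m}" using theI'[OF u] unfolding t_def by blast
  obtain i j where tij: "t = (i, j)" by (cases t)
  have "var_of D n m \<Omega> p = W i j" using True unfolding var_of_def t_def[symmetric] tij by simp
  then show ?thesis using t tij by (simp add: phi_def)
next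
  case False
  then have "var_of D n m \<Omega> p = X p" unfolding var_of_def by simp
  then show ?thesis using False assms(2) by (auto simp: phi_def)
qed

lemma prod_rel_reduct:
  "R \<in> S' \<Longrightarrow> prod_rel D n m \<Omega> ar (reduct I S') R = prod_rel D n m \<Omega> ar I R"
  by (simp add: prod_rel_def reduct_def)

lemma finite_prod_dom:
  assumes "finite D" "\<Omega> \<subseteq> adversaries D m"
  shows "finite (prod_dom D n m \<Omega>)"
proof -
  have fO: "finite \<Omega>" using assms finite_lists_length_eq[OF assms(1), of m]
    unfolding adversaries_def
    by (metis (no_types, lifting) Collect_cong finite_Pow_iff finite_subset)
  have "prod_index D n m \<Omega> \<subseteq> \<Omega> \<times> (({1..n} \<times> {1..m}) \<rightarrow>\<^sub>E D)"
    unfolding prod_index_def consistent_maps_def by auto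
  moreover have "finite (\<Omega> \<times> (({1..n} \<times> {1..m}) \<rightarrow>\<^sub>E D))"
    using fO assms(1) by (simp add: finite_PiE)
  ultimately have "finite (prod_index D n m \<Omega>)" by (rule finite_subset)
  then show ?thesis unfolding prod_dom_def using assms(1) by (simp add: finite_PiE)
qed

theorem lemma1:
  fixes A :: "'a set" and \<sigma> :: "'r set" and ar :: "'r \<Rightarrow> nat" and I :: "'r \<Rightarrow> 'a list set"
    and n m :: nat and \<Omega> :: "'a list set set"
  assumes "finite A" and "card A = n"
    and "infinite \<sigma>"
    and "wf_structure A \<sigma> ar I"
    and "\<Omega> \<subseteq> adversaries A m"
    and "consts_distinct A n m \<Omega>"
  shows "sat A I (phi A n m \<Omega> ar I \<sigma>) \<longleftrightarrow>
         (\<forall>\<sigma>'. finite \<sigma>' \<and> \<sigma>' \<subseteq> \<sigma> \<longrightarrow>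
                 sat A (reduct I \<sigma>') (phi A n m \<Omega> ar (reduct I \<sigma>') \<sigma>'))"
proof
  assume H: "sat A I (phi A n m \<Omega> ar I \<sigma>)"
  show "\<forall>\<sigma>'. finite \<sigma>' \<and> \<sigma>' \<subseteq> \<sigma> \<longrightarrow> sat A (reduct I \<sigma>') (phi A n m \<Omega> ar (reduct I \<sigma>') \<sigma>')"
  proof (intro allI impI)
    fix \<sigma>' assume s: "finite \<sigma>' \<and> \<sigma>' \<subseteq> \<sigma>"
    show "sat A (reduct I \<sigma>') (phi A n m \<Omega> ar (reduct I \<sigma>') \<sigma>')"
      unfolding sat_def
    proof (intro allI impI)
      fix g assume g: "\<forall>v\<in>univ_vars (phi A n m \<Omega> ar (reduct I \<sigma>') \<sigma>'). g v \<in> A"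
      then have g': "\<forall>v\<in>univ_vars (phi A n m \<Omega> ar I \<sigma>). g v \<in> A" by (simp add: phi_def)
      obtain h where h1: "\<forall>v\<in>ex_vars (phi A n m \<Omega> ar I \<sigma>). h v \<in> A"
        and h2: "\<forall>(R, vs) \<in> atoms (phi A n m \<Omega> ar I \<sigma>).
           map (\<lambda>v. if v \<in> univ_vars (phi A n m \<Omega> ar I \<sigma>) then g v else h v) vs \<in> I R"
        using H g' unfolding sat_def by blast
      show "\<exists>h. (\<forall>v\<in>ex_vars (phi A n m \<Omega> ar (reduct I \<sigma>') \<sigma>'). h v \<in> A) \<and>
             (\<forall>(R, vs) \<in> atoms (phi A n m \<Omega> ar (reduct I \<sigma>') \<sigma>').
               map (\<lambda>v. if v \<in> univ_vars (phi A n m \<Omega> ar (reduct I \<sigma>') \<sigma>') then g v else h v) vs \<in> reduct I \<sigma>' R)"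
      proof (intro exI conjI)
        show "\<forall>v\<in>ex_vars (phi A n m \<Omega> ar (reduct I \<sigma>') \<sigma>'). h v \<in> A" using h1 by (simp add: phi_def)
        show "\<forall>(R, vs) \<in> atoms (phi A n m \<Omega> ar (reduct I \<sigma>') \<sigma>').
               map (\<lambda>v. if v \<in> univ_vars (phi A n m \<Omega> ar (reduct I \<sigma>') \<sigma>') then g v else h v) vs \<in> reduct I \<sigma>' R"
        proof (clarify)
          fix R vs assume a: "(R, vs) \<in> atoms (phi A n m \<Omega> ar (reduct I \<sigma>') \<sigma>')"
          then obtain ps where R: "R \<in> \<sigma>'" and ps: "ps \<in> prod_rel A n m \<Omega> ar (reduct I \<sigma>') R"
            and vs: "vs = map (var_of A n m \<Omega>) ps" by (auto simp: phi_def)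
          have "(R, vs) \<in> atoms (phi A n m \<Omega> ar I \<sigma>)"
          proof -
            have "ps \<in> prod_rel A n m \<Omega> ar I R" using ps prod_rel_reduct[OF R, of A n m \<Omega> ar I] by simp
            moreover have "R \<in> \<sigma>" using R s by blast
            ultimately show ?thesis unfolding vs phi_def by auto
          qed
          then show "map (\<lambda>v. if v \<in> univ_vars (phi A n m \<Omega> ar (reduct I \<sigma>') \<sigma>') then g v else h v) vs \<in> reduct I \<sigma>' R"
            using h2 R by (auto simp: phi_def reduct_def)
        qed
      qed
    qed
  qed
next
  assume H: "\<forall>\<sigma>'. finite \<sigma>' \<and> \<sigma>' \<subseteq> \<sigma> \<longrightarrow> sat A (reduct I \<sigma>') (phi A n m \<Omega> ar (reduct I \<sigma>') \<sigma>')"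
  let ?P = "phi A n m \<Omega> ar I \<sigma>"
  define U where "U = univ_vars ?P"
  define E where "E = ex_vars ?P"
  have UE: "\<And>S J. univ_vars (phi A n m \<Omega> ar J S) = U" "\<And>S J. ex_vars (phi A n m \<Omega> ar J S) = E"
    by (simp_all add: U_def E_def phi_def)
  have fE: "finite E"
  proof -
    have "E \<subseteq> X ` prod_dom A n m \<Omega>" by (auto simp: E_def phi_def)
    then show ?thesis using finite_prod_dom[OF assms(1,5)] finite_subset by blast
  qed
  have varin: "\<And>R vs. (R, vs) \<in> atoms ?P \<Longrightarrow> set vs \<subseteq> U \<union> E"
  proof -
    fix R vs assume "(R, vs) \<in> atoms ?P"
    then obtain ps where ps: "ps \<in> prod_rel A n m \<Omega> ar I R" and vs: "vs = map (var_of A n m \<Omega>) ps"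
      by (auto simp: phi_def)
    have "set ps \<subseteq> prod_dom A n m \<Omega>" using ps by (simp add: prod_rel_def)
    then show "set vs \<subseteq> U \<union> E" using vs var_of_in[OF assms(6), of _ ar I \<sigma>]
      unfolding U_def E_def by auto
  qed
  show "sat A I ?P"
    unfolding sat_def UE
  proof (intro allI impI, rule ccontr)
    fix g assume g: "\<forall>v\<in>U. g v \<in> A"
    assume N: "\<not> (\<exists>h. (\<forall>v\<in>E. h v \<in> A) \<and>
             (\<forall>(R, vs)\<in>atoms ?P. map (\<lambda>v. if v \<in> U then g v else h v) vs \<in> I R))"
    define Hs where "Hs = E \<rightarrow>\<^sub>E A"
    have fHs: "finite Hs" unfolding Hs_def using fE assms(1) by (simp add: finite_PiE)
    have "\<forall>h\<in>Hs. \<exists>a. a \<in> atoms ?P \<and> map (\<lambda>v. if v \<in> U then g v else h v) (snd a) \<notin> I (fst a)"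
    proof
      fix h assume "h \<in> Hs"
      then have "\<forall>v\<in>E. h v \<in> A" by (auto simp: Hs_def)
      then have "\<not> (\<forall>(R, vs)\<in>atoms ?P. map (\<lambda>v. if v \<in> U then g v else h v) vs \<in> I R)"
        using N by blast
      then show "\<exists>a. a \<in> atoms ?P \<and> map (\<lambda>v. if v \<in> U then g v else h v) (snd a) \<notin> I (fst a)"
        by (fastforce simp: case_prod_beta)
    qed
    then obtain F where F0: "\<forall>h\<in>Hs. F h \<in> atoms ?P \<and>
        map (\<lambda>v. if v \<in> U then g v else h v) (snd (F h)) \<notin> I (fst (F h))"
      by (rule bchoice[THEN exE])
    have F: "\<And>h. h \<in> Hs \<Longrightarrow> F h \<in> atoms ?P \<and>
        map (\<lambda>v. if v \<in> U then g v else h v) (snd (F h)) \<notin> I (fst (F h))"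
      using F0 by blast
    define S' where "S' = (fst \<circ> F) ` Hs"
    have S'sub: "S' \<subseteq> \<sigma>"
    proof
      fix R assume "R \<in> S'"
      then obtain h where hh: "h \<in> Hs" and R: "R = fst (F h)" by (auto simp: S'_def)
      have "F h \<in> atoms ?P" using F[OF hh] by blast
      then show "R \<in> \<sigma>" unfolding R by (auto simp: phi_def)
    qed
    have "finite S'" using fHs by (simp add: S'_def)
    then have "sat A (reduct I S') (phi A n m \<Omega> ar (reduct I S') S')" using H S'sub by blast
    then obtain h' where h'1: "\<forall>v\<in>E. h' v \<in> A"
      and h'2: "\<forall>(R, vs) \<in> atoms (phi A n m \<Omega> ar (reduct I S') S').
           map (\<lambda>v. if v \<in> U then g v else h' v) vs \<in> reduct I S' R"
      using g unfolding sat_def UE by blast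
    define h where "h = restrict h' E"
    have hH: "h \<in> Hs" using h'1 by (simp add: h_def Hs_def)
    obtain R vs where Fh: "F h = (R, vs)" by (cases "F h")
    have at: "(R, vs) \<in> atoms ?P" and bad: "map (\<lambda>v. if v \<in> U then g v else h v) vs \<notin> I R"
      using F[OF hH] Fh by auto
    have RS': "R \<in> S'" using hH Fh unfolding S'_def by (metis comp_apply fst_conv image_eqI)
    from at obtain ps where ps: "ps \<in> prod_rel A n m \<Omega> ar I R" and vs: "vs = map (var_of A n m \<Omega>) ps"
      by (auto simp: phi_def)
    have "(R, vs) \<in> atoms (phi A n m \<Omega> ar (reduct I S') S')"
    proof -
      have "ps \<in> prod_rel A n m \<Omega> ar (reduct I S') R" using ps prod_rel_reduct[OF RS', of A n m \<Omega> ar I] by simp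
      then show ?thesis using RS' unfolding vs phi_def by auto
    qed
    then have "map (\<lambda>v. if v \<in> U then g v else h' v) vs \<in> I R"
      using h'2 RS' by (auto simp: reduct_def)
    moreover have "map (\<lambda>v. if v \<in> U then g v else h' v) vs = map (\<lambda>v. if v \<in> U then g v else h v) vs"
      using varin[OF at] by (auto simp: h_def)
    ultimately show False using bad by simp
  qed
qed

end
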